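(* Let $n\geq 2$ and let $L'_n$ be the graph of the $\alpha,\omega$-dicyclobutadieno derivative of $[n-1]$-phenylene (defined in the context). Then the base polynomial counting distances between pairs of degree-3 vertices of $L'_n$ is \begin{eqnarray*} H^{3,3}_{b}(L'_{n}) &=& 2(2n-3)x+2\sum_{k=2}^{n-1}(3n-3k-1)x^{3k-2}+2\sum_{k=1}^{n-1}(2n-2k-1)x^{3k-1}\\&&+2\sum_{k=1}^{n-1}(3n-3k-2)x^{3k}. \end{eqnarray*}
   Context: All graphs are finite, simple and connected; $d(u,v)$ denotes the shortest-path distance and $d_u$ the degree of a vertex $u$. For a graph $G$ and a degree $p$, the base polynomial is $H^{p,p}_{b}(G)=\sum x^{d(u,v)}$, where the sum runs over all unordered pairs $\{u,v\}$ of distinct vertices of $G$ both of degree $p$. Construction of $L'_n$ ($n\ge 2$): take $n-1$ hexagons $H_1,\dots,H_{n-1}$, hexagon $H_i$ being the 6-cycle $a_i b_i c_i d_i e_i f_i a_i$, and for $i=1,\dots,n-2$ add edges $b_i f_{i+1}$ and $c_i e_{i+1}$ (so consecutive hexagons are joined by the 4-cycle $b_i c_i e_{i+1} f_{i+1}$). Then add four new vertices $p,q,r,s$ with edges $pq$, $pf_1$, $qe_1$ (forming the 4-cycle $f_1 e_1 q p$) and $rs$, $rb_{n-1}$, $sc_{n-1}$ (forming the 4-cycle $b_{n-1} c_{n-1} s r$). Thus $L'_n$ has $n-1$ hexagons and $n$ squares, $2n+2$ vertices of degree 2 and $4n-4$ vertices of degree 3. *)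

theory Defs
  imports "HOL-Computational_Algebra.Polynomial"
begin

definition degree_in :: "'a set \<Rightarrow> ('a \<Rightarrow> 'a \<Rightarrow> bool) \<Rightarrow> 'a \<Rightarrow> nat" where
  "degree_in V E u = card {v \<in> V. E u v}"

fun walk_in :: "'a set \<Rightarrow> ('a \<Rightarrow> 'a \<Rightarrow> bool) \<Rightarrow> nat \<Rightarrow> 'a \<Rightarrow> 'a \<Rightarrow> bool" where
  "walk_in V E 0 u v = (u \<in> V \<and> u = v)"
| "walk_in V E (Suc k) u v = (u \<in> V \<and> (\<exists>w\<in>V. E u w \<and> walk_in V E k w v))"

definition gdist :: "'a set \<Rightarrow> ('a \<Rightarrow> 'a \<Rightarrow> bool) \<Rightarrow> 'a \<Rightarrow> 'a \<Rightarrow> nat" where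
  "gdist V E u v = (LEAST k. walk_in V E k u v)"

definition base_poly :: "'a set \<Rightarrow> ('a \<Rightarrow> 'a \<Rightarrow> bool) \<Rightarrow> nat \<Rightarrow> int poly" where
  "base_poly V E p =
     (\<Sum>e \<in> {{u, v} | u v. u \<in> V \<and> v \<in> V \<and> u \<noteq> v \<and>
                           degree_in V E u = p \<and> degree_in V E v = p}.
        monom 1 (LEAST k. \<exists>u v. e = {u, v} \<and> walk_in V E k u v))"

datatype lvert = Av nat | Bv nat | Cv nat | Dv nat | Ev nat | Fv nat | Pv | Qv | Rv | Sv

definition L_verts :: "nat \<Rightarrow> lvert set" where
  "L_verts n = (\<Union>i\<in>{1..n-1}. {Av i, Bv i, Cv i, Dv i, Ev i, Fv i}) \<union> {Pv, Qv, Rv, Sv}"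

definition L_edge_pairs :: "nat \<Rightarrow> (lvert \<times> lvert) set" where
  "L_edge_pairs n =
     (\<Union>i\<in>{1..n-1}. {(Av i, Bv i), (Bv i, Cv i), (Cv i, Dv i), (Dv i, Ev i),
                      (Ev i, Fv i), (Fv i, Av i)})
   \<union> (\<Union>i\<in>{1..n-2}. {(Bv i, Fv (Suc i)), (Cv i, Ev (Suc i))})
   \<union> {(Pv, Qv), (Pv, Fv 1), (Qv, Ev 1), (Rv, Sv), (Rv, Bv (n-1)), (Sv, Cv (n-1))}"

definition L_adj :: "nat \<Rightarrow> lvert \<Rightarrow> lvert \<Rightarrow> bool" where
  "L_adj n u v = ((u, v) \<in> L_edge_pairs n \<or> (v, u) \<in> L_edge_pairs n)"

end

theory Submission
  imports Defs
begin


fun side :: "lvert \<Rightarrow> bool" where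
  "side (Av i) = True" | "side (Bv i) = True" | "side (Fv i) = True"
| "side Pv = True" | "side Rv = True"
| "side (Cv i) = False" | "side (Dv i) = False" | "side (Ev i) = False"
| "side Qv = False" | "side Sv = False"

fun pos :: "nat \<Rightarrow> lvert \<Rightarrow> int" where
  "pos n (Av i) = 3 * int i - 2" | "pos n (Dv i) = 3 * int i - 2"
| "pos n (Bv i) = 3 * int i - 1" | "pos n (Cv i) = 3 * int i - 1"
| "pos n (Ev i) = 3 * int i - 3" | "pos n (Fv i) = 3 * int i - 3"
| "pos n Pv = -1" | "pos n Qv = -1" | "pos n Rv = 3 * int n - 3" | "pos n Sv = 3 * int n - 3"

definition DD :: "nat \<Rightarrow> lvert \<Rightarrow> lvert \<Rightarrow> int" where
  "DD n u v = \<bar>pos n u - pos n v\<bar> + (if side u = side v then 0 else 1)"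

lemma edge_unit:
  assumes "n \<ge> 2" "L_adj n u w"
  shows "(side u = side w \<and> \<bar>pos n u - pos n w\<bar> = 1) \<or> (side u \<noteq> side w \<and> pos n u = pos n w)"
  using assms unfolding L_adj_def L_edge_pairs_def
  by (auto simp: of_nat_diff)

lemma DD_tri: "DD n u v \<le> DD n u w + DD n w v"
  unfolding DD_def by auto

lemma DD_edge: "n \<ge> 2 \<Longrightarrow> L_adj n u w \<Longrightarrow> DD n u v \<le> 1 + DD n w v"
  using DD_tri[of n u v w] edge_unit[of n u w] unfolding DD_def by auto

lemma walk_lower: "n \<ge> 2 \<Longrightarrow> walk_in V (L_adj n) k u v \<Longrightarrow> DD n u v \<le> int k"
proof (induction k arbitrary: u)
  case 0 then show ?case by (simp add: DD_def)
next
  case (Suc k)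
  then obtain w where "L_adj n u w" "walk_in V (L_adj n) k w v" by auto
  with Suc show ?case using DD_edge[of n u w v] by fastforce
qed

lemma walk_V: "walk_in V E k u v \<Longrightarrow> u \<in> V \<and> v \<in> V"
  by (induction k arbitrary: u) auto

lemma walk_app: "walk_in V E a u w \<Longrightarrow> walk_in V E b w v \<Longrightarrow> walk_in V E (a+b) u v"
  by (induction a arbitrary: u) auto

lemma walk_rev: assumes "\<And>x y. E x y \<Longrightarrow> E y x"
  shows "walk_in V E k u v \<Longrightarrow> walk_in V E k v u"
proof (induction k arbitrary: u)
  case 0 then show ?case by auto
next
  case (Suc k)
  then obtain w where w: "u \<in> V" "w \<in> V" "E u w" "walk_in V E k w v" by auto
  then have "walk_in V E k v w" using Suc by auto
  moreover have "walk_in V E 1 w u" using w assms by auto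
  ultimately show ?case using walk_app[of V E k v w 1 u] by simp
qed

lemma L_adj_sym: "L_adj n x y \<Longrightarrow> L_adj n y x" unfolding L_adj_def by auto



lemma memV[simp]:
  "Av i \<in> L_verts n \<longleftrightarrow> 1 \<le> i \<and> i \<le> n-1"
  "Bv i \<in> L_verts n \<longleftrightarrow> 1 \<le> i \<and> i \<le> n-1"
  "Cv i \<in> L_verts n \<longleftrightarrow> 1 \<le> i \<and> i \<le> n-1"
  "Dv i \<in> L_verts n \<longleftrightarrow> 1 \<le> i \<and> i \<le> n-1"
  "Ev i \<in> L_verts n \<longleftrightarrow> 1 \<le> i \<and> i \<le> n-1"
  "Fv i \<in> L_verts n \<longleftrightarrow> 1 \<le> i \<and> i \<le> n-1"
  "Pv \<in> L_verts n" "Qv \<in> L_verts n" "Rv \<in> L_verts n" "Sv \<in> L_verts n"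
  unfolding L_verts_def by auto

lemma pos_inj:
  assumes "n \<ge> 2" "u \<in> L_verts n" "v \<in> L_verts n" "pos n u = pos n v" "side u = side v"
  shows "u = v"
  using assms by (cases u; cases v) (auto simp: of_nat_diff, presburger+)

lemma next_vert:
  assumes "n \<ge> 2" "u \<in> L_verts n" "pos n u < 3 * int n - 3"
  shows "\<exists>w \<in> L_verts n. side w = side u \<and> pos n w = pos n u + 1 \<and> L_adj n u w"
proof (cases u)
  case (Av i) then show ?thesis using assms by (intro bexI[of _ "Bv i"]) (auto simp: L_adj_def L_edge_pairs_def)
next
  case (Dv i) then show ?thesis using assms by (intro bexI[of _ "Cv i"]) (auto simp: L_adj_def L_edge_pairs_def)
next
  case (Ev i) then show ?thesis using assms by (intro bexI[of _ "Dv i"]) (auto simp: L_adj_def L_edge_pairs_def)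
next
  case (Fv i) then show ?thesis using assms by (intro bexI[of _ "Av i"]) (auto simp: L_adj_def L_edge_pairs_def)
next
  case Pv then show ?thesis using assms by (intro bexI[of _ "Fv 1"]) (auto simp: L_adj_def L_edge_pairs_def)
next
  case Qv then show ?thesis using assms by (intro bexI[of _ "Ev 1"]) (auto simp: L_adj_def L_edge_pairs_def)
next
  case Rv then show ?thesis using assms by auto
next
  case Sv then show ?thesis using assms by auto
next
  case (Bv i) show ?thesis
  proof (cases "i < n - 1")
    case True then show ?thesis using assms Bv by (intro bexI[of _ "Fv (Suc i)"]) (auto simp: L_adj_def L_edge_pairs_def)
  next
    case False then have "i = n - 1" using assms Bv by auto
    then show ?thesis using assms Bv by (intro bexI[of _ "Rv"]) (auto simp: L_adj_def L_edge_pairs_def of_nat_diff)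
  qed
next
  case (Cv i) show ?thesis
  proof (cases "i < n - 1")
    case True then show ?thesis using assms Cv by (intro bexI[of _ "Ev (Suc i)"]) (auto simp: L_adj_def L_edge_pairs_def)
  next
    case False then have "i = n - 1" using assms Cv by auto
    then show ?thesis using assms Cv by (intro bexI[of _ "Sv"]) (auto simp: L_adj_def L_edge_pairs_def of_nat_diff)
  qed
qed

lemma pos_range: "n \<ge> 2 \<Longrightarrow> u \<in> L_verts n \<Longrightarrow> pos n u \<le> 3 * int n - 3"
  by (cases u) auto

lemma same_side_walk:
  assumes "n \<ge> 2"
  shows "\<And>u v. u \<in> L_verts n \<Longrightarrow> v \<in> L_verts n \<Longrightarrow> side u = side v \<Longrightarrow> pos n v - pos n u = int d
     \<Longrightarrow> walk_in (L_verts n) (L_adj n) d u v"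
proof (induction d)
  case 0 then show ?case using pos_inj[OF assms, of u v] by simp
next
  case (Suc d)
  have "pos n u < 3 * int n - 3" using pos_range[OF assms Suc.prems(2)] Suc.prems by simp
  then obtain w where w: "w \<in> L_verts n" "side w = side u" "pos n w = pos n u + 1" "L_adj n u w"
    using next_vert[OF assms Suc.prems(1)] by blast
  have "walk_in (L_verts n) (L_adj n) d w v" using Suc.IH[OF w(1) Suc.prems(2)] w Suc.prems by simp
  then show ?case using w Suc.prems by auto
qed

definition Dm :: "nat \<Rightarrow> lvert set" where
  "Dm m = (\<Union>i\<in>{1..m}. {Bv i, Cv i, Ev i, Fv i})"

lemma rung:
  assumes "n \<ge> 2" "u \<in> Dm (n-1)"
  shows "\<exists>w \<in> L_verts n. side w \<noteq> side u \<and> pos n w = pos n u \<and> L_adj n u w"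
proof -
  obtain i where i: "1 \<le> i" "i \<le> n-1" "u \<in> {Bv i, Cv i, Ev i, Fv i}" using assms unfolding Dm_def by auto
  then show ?thesis
  proof (elim insertE)
    assume "u = Bv i" then show ?thesis using i by (intro bexI[of _ "Cv i"]) (auto simp: L_adj_def L_edge_pairs_def)
  next
    assume "u = Cv i" then show ?thesis using i by (intro bexI[of _ "Bv i"]) (auto simp: L_adj_def L_edge_pairs_def)
  next
    assume "u = Ev i" then show ?thesis using i by (intro bexI[of _ "Fv i"]) (auto simp: L_adj_def L_edge_pairs_def)
  next
    assume "u = Fv i" then show ?thesis using i by (intro bexI[of _ "Ev i"]) (auto simp: L_adj_def L_edge_pairs_def)
  qed simp
qed

lemma Dm_V: "n \<ge> 2 \<Longrightarrow> Dm (n-1) \<subseteq> L_verts n"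
  unfolding Dm_def by auto

lemma walk_D:
  assumes "n \<ge> 2" "u \<in> Dm (n-1)" "v \<in> L_verts n"
  shows "walk_in (L_verts n) (L_adj n) (nat (DD n u v)) u v"
proof -
  have uV: "u \<in> L_verts n" using Dm_V assms by auto
  have ss: "walk_in (L_verts n) (L_adj n) (nat \<bar>pos n a - pos n b\<bar>) a b"
    if "a \<in> L_verts n" "b \<in> L_verts n" "side a = side b" for a b
  proof (cases "pos n a \<le> pos n b")
    case True then show ?thesis using same_side_walk[OF assms(1) that, of "nat (pos n b - pos n a)"] by simp
  next
    case False
    then have "walk_in (L_verts n) (L_adj n) (nat \<bar>pos n a - pos n b\<bar>) b a"
      using same_side_walk[OF assms(1) that(2,1) that(3)[symmetric], of "nat (pos n a - pos n b)"] by simp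
    then show ?thesis using walk_rev[of "L_adj n", OF L_adj_sym] by blast
  qed
  show ?thesis
  proof (cases "side u = side v")
    case True then show ?thesis using ss[OF uV assms(3)] by (simp add: DD_def)
  next
    case False
    obtain w where w: "w \<in> L_verts n" "side w \<noteq> side u" "pos n w = pos n u" "L_adj n u w"
      using rung[OF assms(1,2)] by blast
    have "side w = side v" using w False by auto
    then have "walk_in (L_verts n) (L_adj n) (nat \<bar>pos n w - pos n v\<bar>) w v" using ss[OF w(1) assms(3)] by simp
    then have "walk_in (L_verts n) (L_adj n) (Suc (nat \<bar>pos n w - pos n v\<bar>)) u v" using w uV by auto
    moreover have "nat (DD n u v) = Suc (nat \<bar>pos n w - pos n v\<bar>)" using False w by (simp add: DD_def)
    ultimately show ?thesis by simp
  qed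
qed

lemma DD_sym: "DD n u v = DD n v u" unfolding DD_def by auto

lemma least_D:
  assumes "n \<ge> 2" "u \<in> Dm (n-1)" "v \<in> L_verts n"
  shows "(LEAST k. \<exists>a b. {u, v} = {a, b} \<and> walk_in (L_verts n) (L_adj n) k a b) = nat (DD n u v)"
proof (rule Least_equality)
  show "\<exists>a b. {u, v} = {a, b} \<and> walk_in (L_verts n) (L_adj n) (nat (DD n u v)) a b"
    using walk_D[OF assms] by blast
next
  fix k assume "\<exists>a b. {u, v} = {a, b} \<and> walk_in (L_verts n) (L_adj n) k a b"
  then obtain a b where ab: "{u, v} = {a, b}" "walk_in (L_verts n) (L_adj n) k a b" by blast
  have "DD n a b \<le> int k" using walk_lower[OF assms(1) ab(2)] .
  moreover have "DD n a b = DD n u v" using ab(1) DD_sym by (auto simp: doubleton_eq_iff)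
  ultimately show "nat (DD n u v) \<le> k" by simp
qed



lemma nb_card: "n \<ge> 2 \<Longrightarrow> u \<in> L_verts n \<Longrightarrow>
  degree_in (L_verts n) (L_adj n) u = (if u \<in> Dm (n-1) then 3 else 2)"
proof (cases u)
  case (Av i)
  assume a: "n \<ge> 2" "u \<in> L_verts n"
  have "{v \<in> L_verts n. L_adj n u v} = {Bv i, Fv i}" using a Av
    by (auto simp: L_adj_def L_edge_pairs_def)
  then show ?thesis using Av by (simp add: degree_in_def Dm_def)
next
  case (Dv i)
  assume a: "n \<ge> 2" "u \<in> L_verts n"
  have "{v \<in> L_verts n. L_adj n u v} = {Cv i, Ev i}" using a Dv
    by (auto simp: L_adj_def L_edge_pairs_def)
  then show ?thesis using Dv by (simp add: degree_in_def Dm_def)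
next
  case Pv
  assume a: "n \<ge> 2" "u \<in> L_verts n"
  have "{v \<in> L_verts n. L_adj n u v} = {Qv, Fv 1}" using a Pv
    by (auto simp: L_adj_def L_edge_pairs_def)
  then show ?thesis using Pv by (simp add: degree_in_def Dm_def)
next
  case Qv
  assume a: "n \<ge> 2" "u \<in> L_verts n"
  have "{v \<in> L_verts n. L_adj n u v} = {Pv, Ev 1}" using a Qv
    by (auto simp: L_adj_def L_edge_pairs_def)
  then show ?thesis using Qv by (simp add: degree_in_def Dm_def)
next
  case Rv
  assume a: "n \<ge> 2" "u \<in> L_verts n"
  have "{v \<in> L_verts n. L_adj n u v} = {Sv, Bv (n-1)}" using a Rv
    by (auto simp: L_adj_def L_edge_pairs_def)
  then show ?thesis using Rv by (simp add: degree_in_def Dm_def)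
next
  case Sv
  assume a: "n \<ge> 2" "u \<in> L_verts n"
  have "{v \<in> L_verts n. L_adj n u v} = {Rv, Cv (n-1)}" using a Sv
    by (auto simp: L_adj_def L_edge_pairs_def)
  then show ?thesis using Sv by (simp add: degree_in_def Dm_def)
next
  case (Bv i)
  assume a: "n \<ge> 2" "u \<in> L_verts n"
  have "{v \<in> L_verts n. L_adj n u v} = {Av i, Cv i, if i < n-1 then Fv (Suc i) else Rv}"
    using a Bv by (cases "i < n-1") (auto simp: L_adj_def L_edge_pairs_def)
  then show ?thesis using Bv a by (simp add: degree_in_def Dm_def)
next
  case (Cv i)
  assume a: "n \<ge> 2" "u \<in> L_verts n"
  have "{v \<in> L_verts n. L_adj n u v} = {Bv i, Dv i, if i < n-1 then Ev (Suc i) else Sv}"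
    using a Cv by (cases "i < n-1") (auto simp: L_adj_def L_edge_pairs_def)
  then show ?thesis using Cv a by (simp add: degree_in_def Dm_def)
next
  case (Ev i)
  assume a: "n \<ge> 2" "u \<in> L_verts n"
  have "{v \<in> L_verts n. L_adj n u v} = {Dv i, Fv i, if i = 1 then Qv else Cv (i-1)}"
    using a Ev by (cases "i = 1") (auto simp: L_adj_def L_edge_pairs_def)
  then show ?thesis using Ev a by (simp add: degree_in_def Dm_def)
next
  case (Fv i)
  assume a: "n \<ge> 2" "u \<in> L_verts n"
  have "{v \<in> L_verts n. L_adj n u v} = {Av i, Ev i, if i = 1 then Pv else Bv (i-1)}"
    using a Fv by (cases "i = 1") (auto simp: L_adj_def L_edge_pairs_def)
  then show ?thesis using Fv a by (simp add: degree_in_def Dm_def)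
qed



lemma finite_Dm: "finite (Dm m)" unfolding Dm_def by auto

lemma base_ordered:
  assumes n: "n \<ge> 2"
  shows "2 * base_poly (L_verts n) (L_adj n) 3 =
    (\<Sum>u\<in>Dm (n-1). \<Sum>v\<in>Dm (n-1) - {u}. monom 1 (nat (DD n u v)))"
proof -
  let ?V = "L_verts n" and ?E = "L_adj n" and ?D = "Dm (n-1)"
  define S where "S = Sigma ?D (\<lambda>u. ?D - {u})"
  define pr where "pr = (\<lambda>(u::lvert, v::lvert). {u, v})"
  define g where "g = (\<lambda>e. monom (1::int) (LEAST k. \<exists>u v. e = {u, v} \<and> walk_in ?V ?E k u v))"
  have finS: "finite S" unfolding S_def using finite_Dm by auto
  have DV: "?D \<subseteq> ?V" using Dm_V[OF n] .
  have P: "{{u, v} | u v. u \<in> ?V \<and> v \<in> ?V \<and> u \<noteq> v \<and>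
                           degree_in ?V ?E u = 3 \<and> degree_in ?V ?E v = 3} = pr ` S"
  proof -
    have "u \<in> ?V \<and> degree_in ?V ?E u = 3 \<longleftrightarrow> u \<in> ?D" for u
      using nb_card[OF n, of u] DV by (auto split: if_splits)
    then show ?thesis unfolding S_def pr_def by (auto simp: image_def)
  qed
  have bp: "base_poly ?V ?E 3 = sum g (pr ` S)" unfolding base_poly_def P g_def ..
  have "sum (g \<circ> pr) S = (\<Sum>y\<in>pr ` S. sum (g \<circ> pr) {x \<in> S. pr x = y})"
    by (rule sum.image_gen[OF finS])
  also have "\<dots> = (\<Sum>y\<in>pr ` S. 2 * g y)"
  proof (rule sum.cong[OF refl])
    fix y assume "y \<in> pr ` S"
    then obtain u v where uv: "u \<in> ?D" "v \<in> ?D" "u \<noteq> v" "y = {u, v}" unfolding S_def pr_def by auto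
    have "{x \<in> S. pr x = y} = {(u, v), (v, u)}" using uv unfolding S_def pr_def
      by (auto simp: doubleton_eq_iff)
    then show "sum (g \<circ> pr) {x \<in> S. pr x = y} = 2 * g y" using uv unfolding pr_def by (simp add: insert_commute)
  qed
  also have "\<dots> = 2 * sum g (pr ` S)" by (simp add: sum_distrib_left)
  finally have 1: "2 * base_poly ?V ?E 3 = sum (g \<circ> pr) S" using bp by simp
  have "sum (g \<circ> pr) S = (\<Sum>(u, v)\<in>S. monom 1 (nat (DD n u v)))"
  proof (rule sum.cong[OF refl])
    fix x assume "x \<in> S"
    then obtain u v where uv: "x = (u, v)" "u \<in> ?D" "v \<in> ?D" unfolding S_def by auto
    then show "(g \<circ> pr) x = (case x of (u, v) \<Rightarrow> monom 1 (nat (DD n u v)))"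
      using least_D[OF n uv(2)] DV unfolding g_def pr_def by auto
  qed
  also have "\<dots> = (\<Sum>u\<in>?D. \<Sum>v\<in>?D - {u}. monom 1 (nat (DD n u v)))"
    unfolding S_def by (rule sum.Sigma[symmetric]) (auto simp: finite_Dm)
  finally show ?thesis using 1 by simp
qed



lemma coeff_numeral_mult[simp]: "coeff ((numeral w :: int poly) * p) n = numeral w * coeff p n"
  by (simp add: numeral_poly)

definition G :: "nat \<Rightarrow> int poly" where
  "G k = monom 4 (3*k) + monom 4 (3*k+1) + monom 2 (3*k+2) + monom 2 (3*k+3) + monom 2 (3*k-2) + monom 2 (3*k-1)"

definition s :: "nat \<Rightarrow> int poly" where
  "s m = (\<Sum>k=2..m. monom 6 (3*k-2)) + (\<Sum>k=1..m. monom 4 (3*k-1)) + (\<Sum>k=1..m. monom 6 (3*k))"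

definition X :: "nat \<Rightarrow> int poly" where
  "X m = monom 4 1 + monom 4 (3*m+1) + monom 2 (3*m+2) + monom 2 (3*m+3)"

definition c2 :: "int poly" where "c2 = monom 2 1 + monom 2 2 + monom 2 3"

lemma s_Suc: "m \<ge> 1 \<Longrightarrow> s (Suc m) = s m + (monom 6 (3*m+1) + monom 4 (3*m+2) + monom 6 (3*m+3))"
  unfolding s_def by (simp add: sum.cl_ivl_Suc algebra_simps)

lemma fin_id: "m \<ge> 1 \<Longrightarrow> (monom 6 (3*m+1) + monom 4 (3*m+2) + monom 6 (3*m+3)) + X (Suc m) = X m + G (Suc m)"
  unfolding X_def G_def poly_eq_iff by (auto simp: coeff_monom)

lemma sX: "m \<ge> 1 \<Longrightarrow> s m + X m = (\<Sum>k=1..m. G k) + c2"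
proof (induction m rule: dec_induct[where i=1])
  case base
  show ?case unfolding s_def X_def G_def c2_def poly_eq_iff by (auto simp: coeff_monom)
next
  case (step m)
  have "s (Suc m) + X (Suc m) = s m + X m + G (Suc m)"
    using s_Suc[OF step(1)] fin_id[OF step(1)] by (simp add: algebra_simps)
  also have "\<dots> = (\<Sum>k=1..Suc m. G k) + c2" using step(3) by (simp add: sum.cl_ivl_Suc algebra_simps)
  finally show ?case .
qed



definition R :: "nat \<Rightarrow> int poly" where
  "R m = monom (2 * (2 * int (Suc m) - 3)) 1
         + (\<Sum>k=2..m. monom (2 * (3 * int (Suc m) - 3 * int k - 1)) (3*k - 2))
         + (\<Sum>k=1..m. monom (2 * (2 * int (Suc m) - 2 * int k - 1)) (3*k - 1))
         + (\<Sum>k=1..m. monom (2 * (3 * int (Suc m) - 3 * int k - 2)) (3*k))"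

lemma sum_monom_split: "(\<Sum>k\<in>A. monom (a k + b k) (e k)) = (\<Sum>k\<in>A. monom (a k) (e k)) + (\<Sum>k\<in>A. monom (b k) (e k))"
  by (simp add: add_monom[symmetric] sum.distrib)

lemma R_step: assumes "m \<ge> 1" shows "R (Suc m) = R m + (s m + X m)"
proof -
  have 1: "(\<Sum>k=2..Suc m. monom (2 * (3 * int (Suc (Suc m)) - 3 * int k - 1)) (3*k - 2))
     = (\<Sum>k=2..m. monom (2 * (3 * int (Suc m) - 3 * int k - 1)) (3*k - 2)) + (\<Sum>k=2..m. monom 6 (3*k-2))
       + monom 4 (3*m+1)"
  proof -
    have a: "(\<Sum>k=2..m. monom (2 * (3 * int (Suc (Suc m)) - 3 * int k - 1)) (3*k - 2))
        = (\<Sum>k=2..m. monom (2 * (3 * int (Suc m) - 3 * int k - 1)) (3*k - 2)) + (\<Sum>k=2..m. monom 6 (3*k-2))"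
      unfolding sum_monom_split[symmetric] by (rule sum.cong) (auto simp: algebra_simps)
    have b: "(\<Sum>k=2..Suc m. monom (2 * (3 * int (Suc (Suc m)) - 3 * int k - 1)) (3*k - 2))
       = (\<Sum>k=2..m. monom (2 * (3 * int (Suc (Suc m)) - 3 * int k - 1)) (3*k - 2)) + monom 4 (3*m+1)"
      using assms by (simp only: sum.cl_ivl_Suc) (simp add: add.commute)
    show ?thesis unfolding b a ..
  qed
  have 2: "(\<Sum>k=1..Suc m. monom (2 * (2 * int (Suc (Suc m)) - 2 * int k - 1)) (3*k - 1))
     = (\<Sum>k=1..m. monom (2 * (2 * int (Suc m) - 2 * int k - 1)) (3*k - 1)) + (\<Sum>k=1..m. monom 4 (3*k-1))
       + monom 2 (3*m+2)"
  proof -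
    have a: "(\<Sum>k=1..m. monom (2 * (2 * int (Suc (Suc m)) - 2 * int k - 1)) (3*k - 1))
        = (\<Sum>k=1..m. monom (2 * (2 * int (Suc m) - 2 * int k - 1)) (3*k - 1)) + (\<Sum>k=1..m. monom 4 (3*k-1))"
      unfolding sum_monom_split[symmetric] by (rule sum.cong) (auto simp: algebra_simps)
    have b: "(\<Sum>k=1..Suc m. monom (2 * (2 * int (Suc (Suc m)) - 2 * int k - 1)) (3*k - 1))
       = (\<Sum>k=1..m. monom (2 * (2 * int (Suc (Suc m)) - 2 * int k - 1)) (3*k - 1)) + monom 2 (3*m+2)"
      using assms by (simp only: sum.cl_ivl_Suc) (simp add: add.commute)
    show ?thesis unfolding b a ..
  qed
  have 3: "(\<Sum>k=1..Suc m. monom (2 * (3 * int (Suc (Suc m)) - 3 * int k - 2)) (3*k))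
     = (\<Sum>k=1..m. monom (2 * (3 * int (Suc m) - 3 * int k - 2)) (3*k)) + (\<Sum>k=1..m. monom 6 (3*k))
       + monom 2 (3*m+3)"
  proof -
    have a: "(\<Sum>k=1..m. monom (2 * (3 * int (Suc (Suc m)) - 3 * int k - 2)) (3*k))
        = (\<Sum>k=1..m. monom (2 * (3 * int (Suc m) - 3 * int k - 2)) (3*k)) + (\<Sum>k=1..m. monom 6 (3*k))"
      unfolding sum_monom_split[symmetric] by (rule sum.cong) (auto simp: algebra_simps)
    have b: "(\<Sum>k=1..Suc m. monom (2 * (3 * int (Suc (Suc m)) - 3 * int k - 2)) (3*k))
       = (\<Sum>k=1..m. monom (2 * (3 * int (Suc (Suc m)) - 3 * int k - 2)) (3*k)) + monom 2 (3*m+3)"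
      using assms by (simp only: sum.cl_ivl_Suc) (simp add: add.commute)
    show ?thesis unfolding b a ..
  qed
  have 4: "monom (2 * (2 * int (Suc (Suc m)) - 3)) 1 = monom (2 * (2 * int (Suc m) - 3)) 1 + (monom 4 1 :: int poly)"
    by (simp add: add_monom algebra_simps)
  have "R (Suc m) = monom (2 * (2 * int (Suc (Suc m)) - 3)) 1
         + (\<Sum>k=2..Suc m. monom (2 * (3 * int (Suc (Suc m)) - 3 * int k - 1)) (3*k - 2))
         + (\<Sum>k=1..Suc m. monom (2 * (2 * int (Suc (Suc m)) - 2 * int k - 1)) (3*k - 1))
         + (\<Sum>k=1..Suc m. monom (2 * (3 * int (Suc (Suc m)) - 3 * int k - 2)) (3*k))"
    unfolding R_def ..
  also have "\<dots> = R m + (s m + X m)"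
    unfolding 1 2 3 4 R_def s_def X_def by (simp add: algebra_simps)
  finally show ?thesis .
qed



definition Hx :: "nat \<Rightarrow> lvert set" where "Hx j = {Bv j, Cv j, Ev j, Fv j}"

definition fD :: "nat \<Rightarrow> lvert \<Rightarrow> lvert \<Rightarrow> int poly" where
  "fD n u v = monom 1 (nat (DD n u v))"

lemma DDvals: assumes "k \<ge> 1" shows
  "nat (DD n (Bv i) (Bv (i+k))) = 3*k" "nat (DD n (Bv i) (Cv (i+k))) = 3*k+1"
  "nat (DD n (Bv i) (Ev (i+k))) = 3*k-1" "nat (DD n (Bv i) (Fv (i+k))) = 3*k-2"
  "nat (DD n (Cv i) (Bv (i+k))) = 3*k+1" "nat (DD n (Cv i) (Cv (i+k))) = 3*k"
  "nat (DD n (Cv i) (Ev (i+k))) = 3*k-2" "nat (DD n (Cv i) (Fv (i+k))) = 3*k-1"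
  "nat (DD n (Ev i) (Bv (i+k))) = 3*k+3" "nat (DD n (Ev i) (Cv (i+k))) = 3*k+2"
  "nat (DD n (Ev i) (Ev (i+k))) = 3*k" "nat (DD n (Ev i) (Fv (i+k))) = 3*k+1"
  "nat (DD n (Fv i) (Bv (i+k))) = 3*k+2" "nat (DD n (Fv i) (Cv (i+k))) = 3*k+3"
  "nat (DD n (Fv i) (Ev (i+k))) = 3*k+1" "nat (DD n (Fv i) (Fv (i+k))) = 3*k"
  using assms by (simp_all add: DD_def)

lemma monom_4: "monom (4::int) d = monom 1 d + monom 1 d + monom 1 d + monom 1 d"
  by (simp add: add_monom)
lemma monom_2: "monom (2::int) d = monom 1 d + monom 1 d"
  by (simp add: add_monom)

lemma cross_i: assumes "1 \<le> i" "i \<le> m"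
  shows "(\<Sum>u\<in>Hx i. \<Sum>v\<in>Hx (Suc m). fD n u v) = G (Suc m - i)"
proof -
  define k where "k = Suc m - i"
  have k1: "k \<ge> 1" and j: "Suc m = i + k" using assms unfolding k_def by auto
  show ?thesis unfolding j k_def[symmetric]
    unfolding Hx_def fD_def G_def monom_4 monom_2
    by (simp add: DDvals[OF k1] ac_simps)
qed



lemma within: "(\<Sum>u\<in>Hx j. \<Sum>v\<in>Hx j - {u}. fD n u v) = 2 * c2"
  unfolding Hx_def fD_def c2_def monom_2
  by (simp add: DD_def insert_Diff_if ac_simps distrib_left)

lemma Dm_UN: "Dm m = (\<Union>i\<in>{1..m}. Hx i)" unfolding Dm_def Hx_def ..

lemma cross: "(\<Sum>u\<in>Dm m. \<Sum>v\<in>Hx (Suc m). fD n u v) = (\<Sum>k=1..m. G k)"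
proof -
  have "(\<Sum>u\<in>Dm m. \<Sum>v\<in>Hx (Suc m). fD n u v) = (\<Sum>i=1..m. \<Sum>u\<in>Hx i. \<Sum>v\<in>Hx (Suc m). fD n u v)"
    unfolding Dm_UN by (rule sum.UNION_disjoint) (auto simp: Hx_def)
  also have "\<dots> = (\<Sum>i=1..m. G (Suc m - i))" by (rule sum.cong) (auto simp: cross_i)
  also have "\<dots> = (\<Sum>k=1..m. G k)"
    using sum.atLeastAtMost_rev[of G 1 m] by simp
  finally show ?thesis .
qed

definition W :: "nat \<Rightarrow> nat \<Rightarrow> int poly" where
  "W n m = (\<Sum>u\<in>Dm m. \<Sum>v\<in>Dm m - {u}. fD n u v)"

lemma fin_Hx: "finite (Hx j)" unfolding Hx_def by simp

lemma W_Suc: "W n (Suc m) = W n m + 2 * (\<Sum>k=1..m. G k) + 2 * c2"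
proof -
  let ?D = "Dm m" and ?H = "Hx (Suc m)"
  have DS: "Dm (Suc m) = ?D \<union> ?H" unfolding Dm_UN by (auto simp: atLeastAtMostSuc_conv)
  have disj: "?D \<inter> ?H = {}" unfolding Dm_def Hx_def by auto
  have e0: "W n (Suc m) = (\<Sum>u\<in>?D. \<Sum>v\<in>(?D \<union> ?H) - {u}. fD n u v) + (\<Sum>u\<in>?H. \<Sum>v\<in>(?D \<union> ?H) - {u}. fD n u v)"
    unfolding W_def DS by (rule sum.union_disjoint) (auto simp: finite_Dm fin_Hx disj)
  have e1: "(\<Sum>u\<in>?D. \<Sum>v\<in>(?D \<union> ?H) - {u}. fD n u v) = (\<Sum>u\<in>?D. (\<Sum>v\<in>?D - {u}. fD n u v) + (\<Sum>v\<in>?H. fD n u v))"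
  proof (rule sum.cong[OF refl])
    fix u assume "u \<in> ?D"
    then have "(?D \<union> ?H) - {u} = (?D - {u}) \<union> ?H" using disj by auto
    then show "(\<Sum>v\<in>(?D \<union> ?H) - {u}. fD n u v) = (\<Sum>v\<in>?D - {u}. fD n u v) + (\<Sum>v\<in>?H. fD n u v)"
      using disj by (simp, intro sum.union_disjoint) (auto simp: finite_Dm fin_Hx)
  qed
  have e2: "(\<Sum>u\<in>?H. \<Sum>v\<in>(?D \<union> ?H) - {u}. fD n u v) = (\<Sum>u\<in>?H. (\<Sum>v\<in>?D. fD n u v) + (\<Sum>v\<in>?H - {u}. fD n u v))"
  proof (rule sum.cong[OF refl])
    fix u assume "u \<in> ?H"
    then have "(?D \<union> ?H) - {u} = ?D \<union> (?H - {u})" using disj by auto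
    then show "(\<Sum>v\<in>(?D \<union> ?H) - {u}. fD n u v) = (\<Sum>v\<in>?D. fD n u v) + (\<Sum>v\<in>?H - {u}. fD n u v)"
      using disj by (simp, intro sum.union_disjoint) (auto simp: finite_Dm fin_Hx)
  qed
  have e3: "(\<Sum>u\<in>?H. \<Sum>v\<in>?D. fD n u v) = (\<Sum>u\<in>?D. \<Sum>v\<in>?H. fD n u v)"
    by (subst sum.swap) (simp add: fD_def DD_sym)
  have e4: "(\<Sum>u\<in>?D. (\<Sum>v\<in>?D - {u}. fD n u v) + (\<Sum>v\<in>?H. fD n u v)) = W n m + (\<Sum>k=1..m. G k)"
    unfolding sum.distrib W_def cross ..
  have e5: "(\<Sum>u\<in>?H. (\<Sum>v\<in>?D. fD n u v) + (\<Sum>v\<in>?H - {u}. fD n u v)) = (\<Sum>k=1..m. G k) + 2 * c2"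
    unfolding sum.distrib e3 cross within ..
  show ?thesis unfolding e0 e1 e2 e4 e5 by (simp only: mult_2 add.assoc)
qed

lemma W_R: "m \<ge> 1 \<Longrightarrow> W n m = 2 * R m"
proof (induction m rule: dec_induct[where i=1])
  case base
  have D1: "Dm 1 = Hx 1" by (simp add: Dm_def Hx_def)
  have "W n 1 = 2 * c2" unfolding W_def D1 by (rule within)
  also have "\<dots> = 2 * R 1" unfolding R_def c2_def by simp
  finally show ?case .
next
  case (step m)
  have "W n (Suc m) = 2 * R m + 2 * (\<Sum>k=1..m. G k) + 2 * c2" using W_Suc step(3) by simp
  also have "\<dots> = 2 * (R m + (s m + X m))" using sX[OF step(1)] by (simp add: algebra_simps)
  also have "\<dots> = 2 * R (Suc m)" using R_step[OF step(1)] by simp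
  finally show ?case .
qed



theorem theorem2p6:
  fixes n :: nat
  assumes "n \<ge> 2"
  shows "base_poly (L_verts n) (L_adj n) 3 =
           monom (2 * (2 * int n - 3)) 1
         + (\<Sum>k=2..n-1. monom (2 * (3 * int n - 3 * int k - 1)) (3*k - 2))
         + (\<Sum>k=1..n-1. monom (2 * (2 * int n - 2 * int k - 1)) (3*k - 1))
         + (\<Sum>k=1..n-1. monom (2 * (3 * int n - 3 * int k - 2)) (3*k))"
proof -
  have "2 * base_poly (L_verts n) (L_adj n) 3 = W n (n-1)"
    unfolding base_ordered[OF assms] W_def fD_def ..
  also have "\<dots> = 2 * R (n-1)" using assms by (intro W_R) simp
  finally have "base_poly (L_verts n) (L_adj n) 3 = R (n-1)" by simp
  moreover have "Suc (n-1) = n" using assms by simp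
  ultimately show ?thesis unfolding R_def by simp
qed

end
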